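(* Let $P,Q\in\Gamma_n$ and $0<r\le R$ with $r\le p_i/q_i\le R$ for all $i$. Let $s,t\in\mathbb{R}$ with $0\le s\le4$. If $t\le-1$ and $s+t\le1$, then $$\Big(\frac{r+1}{2r}\Big)^{s-3}\frac{(4-s)r+s}{4r^{t+2}}\Phi_t(P\|Q)\le\zeta_s(Q\|P)\le\Big(\frac{R+1}{2R}\Big)^{s-3}\frac{(4-s)R+s}{4R^{t+2}}\Phi_t(P\|Q).$$ If $t\ge-1$ and $s+t\ge2$, then $$\Big(\frac{R+1}{2R}\Big)^{s-3}\frac{(4-s)R+s}{4R^{t+2}}\Phi_t(P\|Q)\le\zeta_s(Q\|P)\le\Big(\frac{r+1}{2r}\Big)^{s-3}\frac{(4-s)r+s}{4r^{t+2}}\Phi_t(P\|Q).$$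
   Context: $\Gamma_n=\{P=(p_1,\dots,p_n): p_i>0,\ \sum_i p_i=1\}$, $n\ge2$. For $P,Q\in\Gamma_n$ and $s\in\mathbb{R}$: $\Phi_s(P\|Q)=[s(s-1)]^{-1}\big[\sum_i p_i^s q_i^{1-s}-1\big]$ for $s\ne0,1$; $\Phi_0(P\|Q)=\sum_i q_i\ln(q_i/p_i)$; $\Phi_1(P\|Q)=\sum_i p_i\ln(p_i/q_i)$. $\zeta_s(Q\|P)=(s-1)^{-1}\sum_i(q_i-p_i)\big(\frac{p_i+q_i}{2p_i}\big)^{s-1}$ for $s\ne1$; $\zeta_1(Q\|P)=\sum_i(q_i-p_i)\ln\frac{p_i+q_i}{2p_i}$. *)

theory Defs
  imports Complex_Main
begin

definition Gamma :: "nat \<Rightarrow> (nat \<Rightarrow> real) set" where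
  "Gamma n = {p. (\<forall>i<n. p i > 0) \<and> (\<Sum>i<n. p i) = 1}"

definition Phi :: "nat \<Rightarrow> real \<Rightarrow> (nat \<Rightarrow> real) \<Rightarrow> (nat \<Rightarrow> real) \<Rightarrow> real" where
  "Phi n s p q =
    (if s = 0 then (\<Sum>i<n. q i * ln (q i / p i))
     else if s = 1 then (\<Sum>i<n. p i * ln (p i / q i))
     else ((\<Sum>i<n. p i powr s * q i powr (1 - s)) - 1) / (s * (s - 1)))"

definition zeta :: "nat \<Rightarrow> real \<Rightarrow> (nat \<Rightarrow> real) \<Rightarrow> (nat \<Rightarrow> real) \<Rightarrow> real" where
  "zeta n s q p =
    (if s = 1 then (\<Sum>i<n. (q i - p i) * ln ((p i + q i) / (2 * p i)))
     else (\<Sum>i<n. (q i - p i) * ((p i + q i) / (2 * p i)) powr (s - 1)) / (s - 1))"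

end

theory Submission imports Defs "HOL-Analysis.Convex" begin

definition ff :: "real \<Rightarrow> real \<Rightarrow> real" where
 "ff t x = (if t = 0 then x - 1 - ln x else if t = 1 then x * ln x - x + 1
            else (x powr t - 1 - t * (x - 1)) / (t * (t - 1)))"
definition ff1 :: "real \<Rightarrow> real \<Rightarrow> real" where
 "ff1 t x = (if t = 0 then 1 - 1 / x else if t = 1 then ln x else (x powr (t - 1) - 1) / (t - 1))"

lemma cancel_helper: "(t::real) \<noteq> 0 \<Longrightarrow> (t * a - t) / (t * b) = (a - 1) / b"
proof -
  assume "t \<noteq> 0"
  have "t * a - t = t * (a - 1)" by (simp add: algebra_simps)
  then show ?thesis using \<open>t \<noteq> 0\<close> by simp
qed

lemma ff_deriv: assumes "x > 0" shows "(ff t has_real_derivative ff1 t x) (at x)"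
proof -
  consider "t = 0" | "t = 1" | "t \<noteq> 0 \<and> t \<noteq> 1" by blast
  then show ?thesis
  proof cases
    case 1
    show ?thesis unfolding ff_def[abs_def] ff1_def 1 using assms
      by (auto intro!: derivative_eq_intros simp: field_simps)
  next
    case 2
    show ?thesis unfolding ff_def[abs_def] ff1_def 2 using assms
      by (auto intro!: derivative_eq_intros simp: field_simps)
  next
    case 3
    have "((\<lambda>x. (x powr t - 1 - t * (x - 1)) / (t * (t - 1))) has_real_derivative ff1 t x) (at x)"
      unfolding ff1_def using assms 3
      by (auto intro!: derivative_eq_intros simp: cancel_helper)
    moreover have "ff t = (\<lambda>x. (x powr t - 1 - t * (x - 1)) / (t * (t - 1)))"
      using 3 by (auto simp: ff_def[abs_def])
    ultimately show ?thesis by simp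
  qed
qed

lemma ff1_deriv: assumes "x > 0" shows "(ff1 t has_real_derivative x powr (t - 2)) (at x)"
proof -
  consider "t = 0" | "t = 1" | "t \<noteq> 0 \<and> t \<noteq> 1" by blast
  then show ?thesis
  proof cases
    case 1
    show ?thesis unfolding ff1_def[abs_def] 1 using assms
      by (auto intro!: derivative_eq_intros simp: powr_minus powr_numeral field_simps power2_eq_square)
  next
    case 2
    show ?thesis unfolding ff1_def[abs_def] 2 using assms
      by (auto intro!: derivative_eq_intros simp: field_simps)
  next
    case 3
    have "((\<lambda>x. (x powr (t - 1) - 1) / (t - 1)) has_real_derivative x powr (t - 2)) (at x)"
      using assms 3
      by (auto intro!: derivative_eq_intros)
    moreover have "ff1 t = (\<lambda>x. (x powr (t - 1) - 1) / (t - 1))"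
      using 3 by (auto simp: ff1_def[abs_def])
    ultimately show ?thesis by simp
  qed
qed
definition GG :: "real \<Rightarrow> real \<Rightarrow> real" where
 "GG s x = (if s = 1 then (1 - x) * ln ((x + 1) / (2 * x))
            else (1 - x) * ((x + 1) / (2 * x)) powr (s - 1) / (s - 1))"
definition GG1 :: "real \<Rightarrow> real \<Rightarrow> real" where
 "GG1 s x = (if s = 1 then - ln ((x + 1) / (2 * x)) else - (((x + 1) / (2 * x)) powr (s - 1)) / (s - 1))
     + (x - 1) / (2 * x^2) * ((x + 1) / (2 * x)) powr (s - 2)"
definition GG2 :: "real \<Rightarrow> real \<Rightarrow> real" where
 "GG2 s x = ((x + 1) / (2 * x)) powr (s - 3) * ((4 - s) * x + s) / (4 * x^4)"

lemma upow_m2: "(x::real) > 0 \<Longrightarrow> ((x + 1) / (2 * x)) powr - 2 = 4 * x^2 / (x + 1)^2"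
  by (simp add: powr_minus powr_numeral power_divide)

lemma pw2: "(x::real) > 0 \<Longrightarrow> ((x + 1) / (2 * x)) powr (s - 2) = ((x + 1) / (2 * x)) * ((x + 1) / (2 * x)) powr (s - 3)"
proof -
  assume "x > 0"
  then have u: "(x + 1) / (2 * x) > 0" by simp
  have "((x + 1) / (2 * x)) powr ((s - 3) + 1) = ((x + 1) / (2 * x)) powr (s - 3) * ((x + 1) / (2 * x)) powr 1"
    by (rule powr_add)
  also have "(s - 3) + 1 = s - 2" by simp
  finally show ?thesis using u \<open>x > 0\<close> by (simp add: mult.commute)
qed

lemma alg: "(x::real) > 0 \<Longrightarrow> ((((x + 1) / (2 * x)) * v - (s - 2) * v * (x - 1) / (2 * (x * x))) * (2 * x\<^sup>2) - (x - 1) * (((x + 1) / (2 * x)) * v) * (4 * x)) / (4 * x ^ 4) + ((x + 1) / (2 * x)) * v / (2 * (x * x))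
   = v * ((4 - s) * x + s) / (4 * x ^ 4)"
  by (simp add: field_simps power2_eq_square power_numeral_reduce)

lemma GG_deriv: assumes "x > 0" shows "(GG s has_real_derivative GG1 s x) (at x)"
proof -
  have u: "(x + 1) / (2 * x) > 0" using assms by simp
  consider "s = 1" | "s \<noteq> 1" by blast
  then show ?thesis
  proof cases
    case 1
    show ?thesis unfolding GG_def[abs_def] GG1_def 1 using assms
      apply (auto intro!: derivative_eq_intros simp: powr_minus)
      using assms apply (simp add: divide_simps add_nonneg_eq_0_iff)
      by (simp add: algebra_simps power2_eq_square power_numeral_reduce)
  next
    case 2
    have "((\<lambda>x. (1 - x) * ((x + 1) / (2 * x)) powr (s - 1) / (s - 1)) has_real_derivative GG1 s x) (at x)"
      unfolding GG1_def using assms 2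
      apply (auto intro!: derivative_eq_intros)
      apply (subgoal_tac "s - 1 \<noteq> 0")
      apply (simp add: field_simps power2_eq_square)
      by simp
    moreover have "GG s = (\<lambda>x. (1 - x) * ((x + 1) / (2 * x)) powr (s - 1) / (s - 1))"
      using 2 by (auto simp: GG_def[abs_def])
    ultimately show ?thesis by simp
  qed
qed

lemma GG1_deriv: assumes "x > 0" shows "(GG1 s has_real_derivative GG2 s x) (at x)"
proof -
  have u: "(x + 1) / (2 * x) > 0" using assms by simp
  consider "s = 1" | "s \<noteq> 1" by blast
  then show ?thesis
  proof cases
    case 1
    have "((\<lambda>x. - ln ((x + 1) / (2 * x)) + (x - 1) / (x * (x + 1))) has_real_derivative GG2 s x) (at x)"
      unfolding GG2_def 1 using assms
      apply (auto intro!: derivative_eq_intros)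
      apply (subst upow_m2)
      using assms apply simp
      using assms apply (simp add: divide_simps add_nonneg_eq_0_iff)
      by (simp add: algebra_simps power2_eq_square power_numeral_reduce)
    then show ?thesis
    proof (rule has_field_derivative_transform_within_open[where S="{0<..}"])
      fix y :: real assume "y \<in> {0<..}"
      then have y: "y > 0" by simp
      have "((y + 1) / (2 * y)) powr (1 - 2) = (2 * y) / (y + 1)"
        using y by (simp add: powr_minus divide_simps)
      then show "- ln ((y + 1) / (2 * y)) + (y - 1) / (y * (y + 1)) = GG1 s y"
        unfolding GG1_def 1 using y apply (simp add: divide_simps add_nonneg_eq_0_iff)
        by (simp add: algebra_simps power2_eq_square)
    qed (use assms in auto)
  next
    case 2
    have "((\<lambda>x. - (((x + 1) / (2 * x)) powr (s - 1)) / (s - 1)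
     + (x - 1) / (2 * x^2) * ((x + 1) / (2 * x)) powr (s - 2)) has_real_derivative GG2 s x) (at x)"
      unfolding GG2_def using assms 2
      apply (auto intro!: derivative_eq_intros)
      apply (simp only: pw2[OF assms])
      apply (rule alg[OF assms])
      done
    moreover have "GG1 s = (\<lambda>x. - (((x + 1) / (2 * x)) powr (s - 1)) / (s - 1)
     + (x - 1) / (2 * x^2) * ((x + 1) / (2 * x)) powr (s - 2))"
      using 2 by (auto simp: GG1_def[abs_def])
    ultimately show ?thesis by simp
  qed
qed

lemma sum_nonneg_convex:
  fixes A A1 A2 :: "real \<Rightarrow> real" and x q :: "nat \<Rightarrow> real"
  assumes dA: "\<And>y. y > 0 \<Longrightarrow> (A has_real_derivative A1 y) (at y)"
    and dA1: "\<And>y. y > 0 \<Longrightarrow> (A1 has_real_derivative A2 y) (at y)"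
    and A2: "\<And>y. r \<le> y \<Longrightarrow> y \<le> R \<Longrightarrow> A2 y \<ge> 0"
    and A0: "A 1 = 0" and r: "0 < r" "r \<le> 1" "1 \<le> R"
    and xi: "\<And>i. i < n \<Longrightarrow> r \<le> x i \<and> x i \<le> R"
    and qi: "\<And>i. i < n \<Longrightarrow> q i \<ge> 0"
    and sx: "(\<Sum>i<n. q i * x i) = (\<Sum>i<n. q i)"
  shows "0 \<le> (\<Sum>i<n. q i * A (x i))"
proof -
  have tan: "A1 1 * (y - 1) \<le> A y - A 1" if "r \<le> y" "y \<le> R" for y
    by (rule f''_imp_f'[where C="{r..R}" and f'=A1 and f''=A2])
       (use that r in \<open>auto intro: dA dA1 A2\<close>)
  have "(\<Sum>i<n. q i * (A1 1 * (x i - 1))) \<le> (\<Sum>i<n. q i * A (x i))"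
  proof (rule sum_mono)
    fix i assume "i \<in> {..<n}"
    then have "i < n" by simp
    have "A1 1 * (x i - 1) \<le> A (x i)" using tan[of "x i"] xi[OF \<open>i < n\<close>] A0 by simp
    then show "q i * (A1 1 * (x i - 1)) \<le> q i * A (x i)"
      using qi[OF \<open>i < n\<close>] by (rule mult_left_mono)
  qed
  moreover have "(\<Sum>i<n. q i * (A1 1 * (x i - 1))) = A1 1 * ((\<Sum>i<n. q i * x i) - (\<Sum>i<n. q i))"
    by (simp add: sum_distrib_left sum_subtractf algebra_simps)
  ultimately show ?thesis using sx by simp
qed


definition hh :: "real \<Rightarrow> real \<Rightarrow> real \<Rightarrow> real" where
  "hh s t y = ((y + 1) / (2 * y)) powr (s - 3) * (((4 - s) * y + s) / (4 * y powr (t + 2)))"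
definition kk :: "real \<Rightarrow> real \<Rightarrow> real \<Rightarrow> real" where
  "kk s t y = (s - 3) * ln ((y + 1) / (2 * y)) + ln ((4 - s) * y + s) - (t + 2) * ln y"
definition NN :: "real \<Rightarrow> real \<Rightarrow> real \<Rightarrow> real" where
  "NN s t y = - (4 - s) * (t + 1) * y^2 + ((4 - s)^2 - 4 * t - 8) * y - s * (s + t - 1)"

lemma w_pos: "(y::real) > 0 \<Longrightarrow> 0 \<le> s \<Longrightarrow> s \<le> 4 \<Longrightarrow> (4 - s) * y + s > 0"
proof -
  assume y: "y > 0" and s: "0 \<le> s" "s \<le> 4"
  show ?thesis
  proof (cases "s = 0")
    case True then show ?thesis using y by simp
  next
    case False
    have "(4 - s) * y \<ge> 0" using y s by simp
    then show ?thesis using False s by linarith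
  qed
qed

lemma hh_exp: assumes "y > 0" "0 \<le> s" "s \<le> 4" shows "hh s t y = exp (kk s t y) / 4"
proof -
  have w: "(4 - s) * y + s > 0" using w_pos assms by blast
  have u: "(y + 1) / (2 * y) > 0" using assms by simp
  show ?thesis unfolding hh_def kk_def using w u assms
    by (simp add: powr_def exp_diff exp_add exp_ln)
qed

lemma kk_deriv: assumes "y > 0" "0 \<le> s" "s \<le> 4"
  shows "(kk s t has_real_derivative NN s t y / (y * (y + 1) * ((4 - s) * y + s))) (at y)"
proof -
  have w: "(4 - s) * y + s > 0" using w_pos assms by blast
  have u: "(y + 1) / (2 * y) > 0" using assms by simp
  show ?thesis unfolding kk_def[abs_def] NN_def using w u assms
    apply (auto intro!: derivative_eq_intros)
    apply (simp add: divide_simps add_nonneg_eq_0_iff)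
    apply (simp add: algebra_simps power2_eq_square)
    done
qed


lemma NN_nonneg: assumes "y > 0" "0 \<le> s" "s \<le> 4" "t \<le> -1" "s + t \<le> 1"
  shows "NN s t y \<ge> 0"
proof -
  have a: "(4 - s) * (- (t + 1)) * y^2 \<ge> 0" using assms by simp
  have c0: "(4 - s)^2 - 4 * t - 8 \<ge> (s - 2)^2" using assms by (simp add: power2_eq_square algebra_simps)
  have c: "((4 - s)^2 - 4 * t - 8) * y \<ge> 0"
  proof -
    have "0 \<le> (s - 2)^2" by simp
    then have "0 \<le> (4 - s)^2 - 4 * t - 8" using c0 by linarith
    then show ?thesis using assms by simp
  qed
  have d: "s * (1 - s - t) \<ge> 0" using assms by simp
  show ?thesis unfolding NN_def using a c d by (simp add: algebra_simps)
qed

lemma NN_nonpos: assumes "y > 0" "0 \<le> s" "s \<le> 4" "t \<ge> -1" "s + t \<ge> 2"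
  shows "NN s t y \<le> 0"
proof -
  have a: "(4 - s) * (t + 1) * y^2 \<ge> 0" using assms by simp
  have c0: "(4 - s)^2 - 4 * t - 8 \<le> s * (s - 4)" using assms by (simp add: power2_eq_square algebra_simps)
  have c1: "s * (s - 4) \<le> 0" using assms by (simp add: mult_nonneg_nonpos)
  have c: "((4 - s)^2 - 4 * t - 8) * y \<le> 0"
    using c0 c1 assms by (intro mult_nonpos_nonneg) auto
  have d: "s * (s + t - 1) \<ge> 0" using assms by simp
  show ?thesis unfolding NN_def using a c d by (simp add: algebra_simps)
qed

lemma kk_mono_gen:
  assumes "0 < a" "a \<le> b" "0 \<le> s" "s \<le> 4"
    and sg: "\<And>y. y > 0 \<Longrightarrow> 0 \<le> c * NN s t y"
  shows "c * kk s t a \<le> c * kk s t b"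
proof -
  have d: "((\<lambda>y. c * kk s t y) has_real_derivative c * (NN s t y / (y * (y + 1) * ((4 - s) * y + s)))) (at y)"
    if "y > 0" for y
    using kk_deriv[OF that assms(3,4), of t] by (rule DERIV_cmult)
  show ?thesis
  proof (rule DERIV_nonneg_imp_increasing_open[OF assms(2)])
    fix y assume y: "a < y" "y < b"
    then have yp: "y > 0" using assms by simp
    have w: "(4 - s) * y + s > 0" using w_pos yp assms by blast
    have "0 \<le> c * NN s t y / (y * (y + 1) * ((4 - s) * y + s))"
      using sg[OF yp] yp w by simp
    then show "\<exists>z. ((\<lambda>y. c * kk s t y) has_real_derivative z) (at y) \<and> 0 \<le> z"
      using d[OF yp] by (intro exI[of _ "c * (NN s t y / (y * (y + 1) * ((4 - s) * y + s)))"]) auto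
  next
    show "continuous_on {a..b} (\<lambda>y. c * kk s t y)"
    proof (intro continuous_at_imp_continuous_on ballI)
      fix y assume "y \<in> {a..b}"
      then have "y > 0" using assms by simp
      then show "isCont (\<lambda>y. c * kk s t y) y" by (rule DERIV_isCont[OF d])
    qed
  qed
qed

lemma hh_inc: assumes "0 < a" "a \<le> b" "0 \<le> s" "s \<le> 4" "t \<le> -1" "s + t \<le> 1"
  shows "hh s t a \<le> hh s t b"
proof -
  have "1 * kk s t a \<le> 1 * kk s t b"
    using assms NN_nonneg by (intro kk_mono_gen) auto
  then show ?thesis using assms by (simp add: hh_exp)
qed

lemma hh_dec: assumes "0 < a" "a \<le> b" "0 \<le> s" "s \<le> 4" "t \<ge> -1" "s + t \<ge> 2"
  shows "hh s t b \<le> hh s t a"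
proof -
  have "(-1) * kk s t a \<le> (-1) * kk s t b"
    using assms NN_nonpos by (intro kk_mono_gen) auto
  then show ?thesis using assms by (simp add: hh_exp)
qed


lemma GG2_hh: "y > 0 \<Longrightarrow> GG2 s y = hh s t y * y powr (t - 2)"
proof -
  assume y: "y > 0"
  have "y powr ((t - 2) + 4) = y powr (t - 2) * y powr 4" by (rule powr_add)
  also have "y powr (4::real) = y ^ 4" using y by (simp add: powr_numeral)
  finally have e: "y powr (t + 2) = y powr (t - 2) * y ^ 4" by (simp add: add.commute)
  have "y powr (t - 2) > 0" using y by simp
  then show ?thesis unfolding GG2_def hh_def e using y by (simp add: field_simps)
qed

lemma A0s: "GG s 1 = 0" "ff t 1 = 0"
  unfolding GG_def ff_def by auto

lemma bound_lower:
  fixes x q :: "nat \<Rightarrow> real"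
  assumes r: "0 < r" "r \<le> 1" "1 \<le> R"
    and xi: "\<And>i. i < n \<Longrightarrow> r \<le> x i \<and> x i \<le> R"
    and qi: "\<And>i. i < n \<Longrightarrow> q i \<ge> 0"
    and sx: "(\<Sum>i<n. q i * x i) = (\<Sum>i<n. q i)"
    and c: "\<And>y. r \<le> y \<Longrightarrow> y \<le> R \<Longrightarrow> c \<le> hh s t y"
  shows "c * (\<Sum>i<n. q i * ff t (x i)) \<le> (\<Sum>i<n. q i * GG s (x i))"
proof -
  have "0 \<le> (\<Sum>i<n. q i * (GG s (x i) - c * ff t (x i)))"
  proof (rule sum_nonneg_convex[where A="\<lambda>y. GG s y - c * ff t y" and r=r and R=R,
      OF _ _ _ _ r xi qi sx])
    show "((\<lambda>y. GG s y - c * ff t y) has_real_derivative GG1 s y - c * ff1 t y) (at y)" if "y > 0" for y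
      by (intro DERIV_diff DERIV_cmult GG_deriv ff_deriv that)
    show "((\<lambda>y. GG1 s y - c * ff1 t y) has_real_derivative GG2 s y - c * y powr (t - 2)) (at y)" if "y > 0" for y
      by (intro DERIV_diff DERIV_cmult GG1_deriv ff1_deriv that)
    show "0 \<le> GG2 s y - c * y powr (t - 2)" if "r \<le> y" "y \<le> R" for y
    proof -
      have y: "y > 0" using that r by simp
      have "c * y powr (t - 2) \<le> hh s t y * y powr (t - 2)"
        using c[OF that] y by (intro mult_right_mono) auto
      then show ?thesis using GG2_hh[OF y, of s t] by simp
    qed
    show "GG s 1 - c * ff t 1 = 0" by (simp add: A0s)
  qed auto
  then show ?thesis
    by (simp add: sum_subtractf sum_distrib_left algebra_simps)
qed

lemma bound_upper:
  fixes x q :: "nat \<Rightarrow> real"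
  assumes r: "0 < r" "r \<le> 1" "1 \<le> R"
    and xi: "\<And>i. i < n \<Longrightarrow> r \<le> x i \<and> x i \<le> R"
    and qi: "\<And>i. i < n \<Longrightarrow> q i \<ge> 0"
    and sx: "(\<Sum>i<n. q i * x i) = (\<Sum>i<n. q i)"
    and c: "\<And>y. r \<le> y \<Longrightarrow> y \<le> R \<Longrightarrow> hh s t y \<le> c"
  shows "(\<Sum>i<n. q i * GG s (x i)) \<le> c * (\<Sum>i<n. q i * ff t (x i))"
proof -
  have "0 \<le> (\<Sum>i<n. q i * (c * ff t (x i) - GG s (x i)))"
  proof (rule sum_nonneg_convex[where A="\<lambda>y. c * ff t y - GG s y" and r=r and R=R,
      OF _ _ _ _ r xi qi sx])
    show "((\<lambda>y. c * ff t y - GG s y) has_real_derivative c * ff1 t y - GG1 s y) (at y)" if "y > 0" for y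
      by (intro DERIV_diff DERIV_cmult GG_deriv ff_deriv that)
    show "((\<lambda>y. c * ff1 t y - GG1 s y) has_real_derivative c * y powr (t - 2) - GG2 s y) (at y)" if "y > 0" for y
      by (intro DERIV_diff DERIV_cmult GG1_deriv ff1_deriv that)
    show "0 \<le> c * y powr (t - 2) - GG2 s y" if "r \<le> y" "y \<le> R" for y
    proof -
      have y: "y > 0" using that r by simp
      have "hh s t y * y powr (t - 2) \<le> c * y powr (t - 2)"
        using c[OF that] y by (intro mult_right_mono) auto
      then show ?thesis using GG2_hh[OF y, of s t] by simp
    qed
    show "c * ff t 1 - GG s 1 = 0" by (simp add: A0s)
  qed auto
  then show ?thesis
    by (simp add: sum_subtractf sum_distrib_left algebra_simps)
qed


lemma Phi_eq:
  assumes pq: "\<And>i. i < n \<Longrightarrow> p i > 0 \<and> q i > 0"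
    and sp: "(\<Sum>i<n. p i) = 1" and sq: "(\<Sum>i<n. q i) = 1"
  shows "Phi n t p q = (\<Sum>i<n. q i * ff t (p i / q i))"
proof -
  have qx: "q i * (p i / q i) = p i" if "i < n" for i using pq[OF that] by simp
  have sx: "(\<Sum>i<n. q i * (p i / q i) - q i) = 0"
    using qx sp sq by (simp add: sum_subtractf)
  consider "t = 0" | "t = 1" | "t \<noteq> 0 \<and> t \<noteq> 1" by blast
  then show ?thesis
  proof cases
    case 1
    have "(\<Sum>i<n. q i * ff t (p i / q i)) = (\<Sum>i<n. (q i * (p i / q i) - q i) + q i * ln (q i / p i))"
      using pq 1 by (intro sum.cong) (auto simp: ff_def ln_div algebra_simps)
    also have "\<dots> = (\<Sum>i<n. q i * ln (q i / p i))" using sx by (simp add: sum.distrib)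
    finally show ?thesis using 1 by (simp add: Phi_def)
  next
    case 2
    have "(\<Sum>i<n. q i * ff t (p i / q i)) = (\<Sum>i<n. p i * ln (p i / q i) - (q i * (p i / q i) - q i))"
      using pq 2 by (intro sum.cong) (auto simp: ff_def algebra_simps)
    also have "\<dots> = (\<Sum>i<n. p i * ln (p i / q i))" using sx by (simp add: sum_subtractf)
    finally show ?thesis using 2 by (simp add: Phi_def)
  next
    case 3
    have e: "q i * (p i / q i) powr t = p i powr t * q i powr (1 - t)" if "i < n" for i
    proof -
      have "q i powr (1 - t) = q i / q i powr t" using pq[OF that] by (simp add: powr_diff)
      then show ?thesis using pq[OF that] by (simp add: powr_divide)
    qed
    have "(\<Sum>i<n. q i * ff t (p i / q i)) = (\<Sum>i<n. (p i powr t * q i powr (1 - t) - q i - t * (p i - q i)) / (t * (t - 1)))"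
    proof (intro sum.cong refl)
      fix i assume "i \<in> {..<n}"
      then have i: "i < n" by simp
      have "q i * ff t (p i / q i) = (q i * (p i / q i) powr t - q i - t * (q i * (p i / q i) - q i)) / (t * (t - 1))"
        using 3 by (simp add: ff_def algebra_simps)
      then show "q i * ff t (p i / q i) = (p i powr t * q i powr (1 - t) - q i - t * (p i - q i)) / (t * (t - 1))"
        by (simp only: e[OF i] qx[OF i])
    qed
    also have "\<dots> = (\<Sum>i<n. (p i powr t * q i powr (1 - t) - q i - t * (p i - q i))) / (t * (t - 1))"
      by (simp add: sum_divide_distrib)
    also have "(\<Sum>i<n. (p i powr t * q i powr (1 - t) - q i - t * (p i - q i)))
       = (\<Sum>i<n. p i powr t * q i powr (1 - t)) - (\<Sum>i<n. q i) - t * ((\<Sum>i<n. p i) - (\<Sum>i<n. q i))"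
      by (simp add: sum_subtractf sum_distrib_left right_diff_distrib)
    finally show ?thesis using 3 sp sq by (simp add: Phi_def)
  qed
qed

lemma zeta_eq:
  assumes pq: "\<And>i. i < n \<Longrightarrow> p i > 0 \<and> q i > 0"
  shows "zeta n s q p = (\<Sum>i<n. q i * GG s (p i / q i))"
proof -
  have u: "(p i / q i + 1) / (2 * (p i / q i)) = (p i + q i) / (2 * p i)" if "i < n" for i
    using pq[OF that] by (simp add: field_simps)
  have v: "q i * (1 - p i / q i) = q i - p i" if "i < n" for i
    using pq[OF that] by (simp add: field_simps)
  have w: "q i * GG s (p i / q i) = (if s = 1 then (q i - p i) * ln ((p i + q i) / (2 * p i))
     else (q i - p i) * ((p i + q i) / (2 * p i)) powr (s - 1) / (s - 1))" if "i < n" for i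
  proof -
    have "q i * GG s (p i / q i) = (if s = 1 then (q i * (1 - p i / q i)) * ln ((p i / q i + 1) / (2 * (p i / q i)))
     else (q i * (1 - p i / q i)) * ((p i / q i + 1) / (2 * (p i / q i))) powr (s - 1) / (s - 1))"
      unfolding GG_def by simp
    then show ?thesis by (simp only: u[OF that] v[OF that])
  qed
  show ?thesis
  proof (cases "s = 1")
    case True
    then show ?thesis unfolding zeta_def using w by (auto intro!: sum.cong)
  next
    case False
    then show ?thesis unfolding zeta_def using w by (auto simp: sum_divide_distrib intro!: sum.cong)
  qed
qed


theorem theorem4p1:
  fixes n :: nat and p q :: "nat \<Rightarrow> real" and r R s t :: real
  assumes "n \<ge> 2"
    and "p \<in> Gamma n" and "q \<in> Gamma n"
    and "0 < r" and "r \<le> R"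
    and "\<And>i. i < n \<Longrightarrow> r \<le> p i / q i \<and> p i / q i \<le> R"
    and "0 \<le> s" and "s \<le> 4"
  shows "(t \<le> -1 \<and> s + t \<le> 1 \<longrightarrow>
           ((r + 1) / (2 * r)) powr (s - 3) * (((4 - s) * r + s) / (4 * r powr (t + 2))) * Phi n t p q
             \<le> zeta n s q p
         \<and> zeta n s q p
             \<le> ((R + 1) / (2 * R)) powr (s - 3) * (((4 - s) * R + s) / (4 * R powr (t + 2))) * Phi n t p q)
       \<and> (t \<ge> -1 \<and> s + t \<ge> 2 \<longrightarrow>
           ((R + 1) / (2 * R)) powr (s - 3) * (((4 - s) * R + s) / (4 * R powr (t + 2))) * Phi n t p q
             \<le> zeta n s q p
         \<and> zeta n s q p
             \<le> ((r + 1) / (2 * r)) powr (s - 3) * (((4 - s) * r + s) / (4 * r powr (t + 2))) * Phi n t p q)"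
proof -
  have pq: "\<And>i. i < n \<Longrightarrow> p i > 0 \<and> q i > 0" using assms(2,3) by (auto simp: Gamma_def)
  have sp: "(\<Sum>i<n. p i) = 1" and sq: "(\<Sum>i<n. q i) = 1" using assms(2,3) by (auto simp: Gamma_def)
  define x where "x i = p i / q i" for i
  have xi: "\<And>i. i < n \<Longrightarrow> r \<le> x i \<and> x i \<le> R" using assms(6) by (simp add: x_def)
  have qi: "\<And>i. i < n \<Longrightarrow> q i \<ge> 0" using pq by (simp add: less_imp_le)
  have "(\<Sum>i<n. q i * x i) = (\<Sum>i<n. p i)"
    using pq by (intro sum.cong) (auto simp: x_def, metis less_irrefl)
  then have sx: "(\<Sum>i<n. q i * x i) = (\<Sum>i<n. q i)" using sp sq by simp
  have "(\<Sum>i<n. q i * r) \<le> (\<Sum>i<n. q i * x i)"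
    using xi qi by (intro sum_mono mult_left_mono) auto
  then have r1: "r \<le> 1" using sx sq by (simp add: sum_distrib_right[symmetric])
  have "(\<Sum>i<n. q i * x i) \<le> (\<Sum>i<n. q i * R)"
    using xi qi by (intro sum_mono mult_left_mono) auto
  then have R1: "1 \<le> R" using sx sq by (simp add: sum_distrib_right[symmetric])
  have Ph: "Phi n t p q = (\<Sum>i<n. q i * ff t (x i))" using Phi_eq[OF pq sp sq] by (simp add: x_def)
  have ze: "zeta n s q p = (\<Sum>i<n. q i * GG s (x i))" using zeta_eq[OF pq] by (simp add: x_def)
  have hr: "((r + 1) / (2 * r)) powr (s - 3) * (((4 - s) * r + s) / (4 * r powr (t + 2))) = hh s t r"
    by (simp add: hh_def)
  have hR: "((R + 1) / (2 * R)) powr (s - 3) * (((4 - s) * R + s) / (4 * R powr (t + 2))) = hh s t R"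
    by (simp add: hh_def)
  note base = assms(4) r1 R1 xi qi sx
  show ?thesis
  proof (intro conjI impI)
    assume c: "t \<le> -1 \<and> s + t \<le> 1"
    show "((r + 1) / (2 * r)) powr (s - 3) * (((4 - s) * r + s) / (4 * r powr (t + 2))) * Phi n t p q \<le> zeta n s q p"
      unfolding hr Ph ze
      by (rule bound_lower[OF base]) (use hh_inc assms(4,7,8) c in auto)
    show "zeta n s q p \<le> ((R + 1) / (2 * R)) powr (s - 3) * (((4 - s) * R + s) / (4 * R powr (t + 2))) * Phi n t p q"
      unfolding hR Ph ze
      by (rule bound_upper[OF base]) (use hh_inc assms(4,7,8) c in auto)
  next
    assume c: "t \<ge> -1 \<and> s + t \<ge> 2"
    show "((R + 1) / (2 * R)) powr (s - 3) * (((4 - s) * R + s) / (4 * R powr (t + 2))) * Phi n t p q \<le> zeta n s q p"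
      unfolding hR Ph ze
      by (rule bound_lower[OF base]) (use hh_dec assms(4,7,8) c in auto)
    show "zeta n s q p \<le> ((r + 1) / (2 * r)) powr (s - 3) * (((4 - s) * r + s) / (4 * r powr (t + 2))) * Phi n t p q"
      unfolding hr Ph ze
      by (rule bound_upper[OF base]) (use hh_dec assms(4,7,8) c in auto)
  qed
qed

end
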